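(* Let $H$ be a digraph and $\delta>0$. If $2a_S\ge|S|$ for all $S\in\mathcal S_H$, then $G(H,\delta)$ is obtained when $y_1=1$. Similarly, if $2b_S\ge|S|$ for all $S\in\mathcal S_H$, then $G(H,\delta)$ is obtained when $y_2=1$.
   Context: A digraph has no self-loops and at most one directed edge per ordered pair; degree = in-degree + out-degree; $\Delta$ is the maximum degree of $H$. $H^*$ is the induced subgraph on vertices of degree $\Delta$; $\mathcal S_H$ is the collection of independent sets of $H^*$ (including $\emptyset$). For $S\in\mathcal S_H$ let $T=\mathsf N(S)$ be the vertices outside $S$ adjacent in either direction to $S$, $\mathsf E(S,T)$ and $\mathsf E(T,S)$ the sets of edges from $S$ to $T$ and from $T$ to $S$, and $F_S$ the bipartite digraph on $S\cup T$ with edges $\mathsf E(S,T)\cup\mathsf E(T,S)$. A maximum fractional matching of $F_S$ is $w:\mathsf E(F_S)\to[0,1]$ with $\sum_{e\ni v}w(e)\le1$ for all vertices and equality for $v\in S$; $a_S=\max_w\sum_{e\in\mathsf E(S,T)}w(e)$, $b_S=\max_w\sum_{e\in\mathsf E(T,S)}w(e)$ over such $w$. $\mathsf v^+(S),\mathsf v^-(S),\mathsf v^{\pm}(S)$ count vertices of $S$ with no in-neighbours, no out-neighbours, and both, in $H$. \[ g_H(x_1,x_2,y_1,y_2)=\sum_{S\in\mathcal S_H}x_1^{\mathsf v^+(S)}x_2^{\mathsf v^-(S)}(x_1\wedge x_2)^{\mathsf v^{\pm}(S)}y_1^{a_S}y_2^{b_S}, \] \[ G(H,\delta)=\inf_{x_1,x_2\ge0,\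 0\le y_1,y_2\le1}\{x_1y_1+x_2y_2:g_H(x_1,x_2,y_1,y_2)=1+\delta\}. \] "Obtained when $y_1=1$" means restricting the infimum to $y_1=1$ does not change its value (similarly for $y_2$). *)

theory Defs
  imports Complex_Main "HOL-Library.Extended_Real"
begin

definition digraph :: "'a set \<Rightarrow> ('a \<times> 'a) set \<Rightarrow> bool" where
  "digraph V E \<longleftrightarrow> finite V \<and> E \<subseteq> V \<times> V \<and> (\<forall>v. (v, v) \<notin> E)"

definition deg :: "('a \<times> 'a) set \<Rightarrow> 'a \<Rightarrow> nat" where
  "deg E v = card {u. (v, u) \<in> E} + card {u. (u, v) \<in> E}"

definition maxdeg :: "'a set \<Rightarrow> ('a \<times> 'a) set \<Rightarrow> nat" where
  "maxdeg V E = Max (deg E ` V)"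

definition Hstar :: "'a set \<Rightarrow> ('a \<times> 'a) set \<Rightarrow> 'a set" where
  "Hstar V E = {v \<in> V. deg E v = maxdeg V E}"

text \<open>\<S>_H: independent sets of the induced subgraph H* (including the empty set).\<close>
definition indep_sets :: "'a set \<Rightarrow> ('a \<times> 'a) set \<Rightarrow> 'a set set" where
  "indep_sets V E = {S. S \<subseteq> Hstar V E \<and> (\<forall>u\<in>S. \<forall>v\<in>S. (u, v) \<notin> E)}"

definition nbhd :: "'a set \<Rightarrow> ('a \<times> 'a) set \<Rightarrow> 'a set \<Rightarrow> 'a set" where
  "nbhd V E S = {v \<in> V - S. \<exists>u\<in>S. (u, v) \<in> E \<or> (v, u) \<in> E}"

definition edges_from_to :: "('a \<times> 'a) set \<Rightarrow> 'a set \<Rightarrow> 'a set \<Rightarrow> ('a \<times> 'a) set" where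
  "edges_from_to E A B = {e \<in> E. fst e \<in> A \<and> snd e \<in> B}"

definition FS_edges :: "'a set \<Rightarrow> ('a \<times> 'a) set \<Rightarrow> 'a set \<Rightarrow> ('a \<times> 'a) set" where
  "FS_edges V E S = edges_from_to E S (nbhd V E S) \<union> edges_from_to E (nbhd V E S) S"

text \<open>Maximum fractional matching of F_S in the sense of the paper: weights in [0,1] on the
  edges of F_S, total weight at most 1 at every vertex of F_S, exactly 1 at every vertex of S.
  (Values of w outside the edges of F_S are irrelevant.)\<close>
definition max_frac_matching ::
    "'a set \<Rightarrow> ('a \<times> 'a) set \<Rightarrow> 'a set \<Rightarrow> ('a \<times> 'a \<Rightarrow> real) \<Rightarrow> bool" where
  "max_frac_matching V E S w \<longleftrightarrow>
     (\<forall>e\<in>FS_edges V E S. 0 \<le> w e \<and> w e \<le> 1) \<and>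
     (\<forall>v\<in>S \<union> nbhd V E S. (\<Sum>e\<in>{e\<in>FS_edges V E S. fst e = v \<or> snd e = v}. w e) \<le> 1) \<and>
     (\<forall>v\<in>S. (\<Sum>e\<in>{e\<in>FS_edges V E S. fst e = v \<or> snd e = v}. w e) = 1)"

text \<open>a_S and b_S (maximum over such w; convention 0 if no such w exists, which can only
  happen in the degenerate edgeless case).\<close>
definition aS :: "'a set \<Rightarrow> ('a \<times> 'a) set \<Rightarrow> 'a set \<Rightarrow> real" where
  "aS V E S = (if {w. max_frac_matching V E S w} = {} then 0
     else Sup ((\<lambda>w. \<Sum>e\<in>edges_from_to E S (nbhd V E S). w e) ` {w. max_frac_matching V E S w}))"

definition bS :: "'a set \<Rightarrow> ('a \<times> 'a) set \<Rightarrow> 'a set \<Rightarrow> real" where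
  "bS V E S = (if {w. max_frac_matching V E S w} = {} then 0
     else Sup ((\<lambda>w. \<Sum>e\<in>edges_from_to E (nbhd V E S) S. w e) ` {w. max_frac_matching V E S w}))"

definition vplus :: "('a \<times> 'a) set \<Rightarrow> 'a set \<Rightarrow> nat" where
  "vplus E S = card {v\<in>S. \<not> (\<exists>u. (u, v) \<in> E)}"

definition vminus :: "('a \<times> 'a) set \<Rightarrow> 'a set \<Rightarrow> nat" where
  "vminus E S = card {v\<in>S. \<not> (\<exists>u. (v, u) \<in> E)}"

definition vpm :: "('a \<times> 'a) set \<Rightarrow> 'a set \<Rightarrow> nat" where
  "vpm E S = card {v\<in>S. (\<exists>u. (u, v) \<in> E) \<and> (\<exists>u. (v, u) \<in> E)}"

text \<open>Real power with the convention y^0 = 1 (also for y = 0).\<close>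
definition rpow :: "real \<Rightarrow> real \<Rightarrow> real" where
  "rpow y a = (if a = 0 then 1 else y powr a)"

definition gH :: "'a set \<Rightarrow> ('a \<times> 'a) set \<Rightarrow> real \<Rightarrow> real \<Rightarrow> real \<Rightarrow> real \<Rightarrow> real" where
  "gH V E x1 x2 y1 y2 =
     (\<Sum>S\<in>indep_sets V E. x1 ^ vplus E S * x2 ^ vminus E S * (min x1 x2) ^ vpm E S
                          * rpow y1 (aS V E S) * rpow y2 (bS V E S))"

definition G_feasible :: "'a set \<Rightarrow> ('a \<times> 'a) set \<Rightarrow> real \<Rightarrow> real \<Rightarrow> real \<Rightarrow> real \<Rightarrow> real \<Rightarrow> bool" where
  "G_feasible V E \<delta> x1 x2 y1 y2 \<longleftrightarrow>
     0 \<le> x1 \<and> 0 \<le> x2 \<and> 0 \<le> y1 \<and> y1 \<le> 1 \<and> 0 \<le> y2 \<and> y2 \<le> 1 \<and>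
     gH V E x1 x2 y1 y2 = 1 + \<delta>"

text \<open>G(H,\<delta>) as an infimum in the extended reals (empty infimum = \<infinity>).\<close>
definition GH :: "'a set \<Rightarrow> ('a \<times> 'a) set \<Rightarrow> real \<Rightarrow> ereal" where
  "GH V E \<delta> = Inf {ereal (x1 * y1 + x2 * y2) | x1 x2 y1 y2. G_feasible V E \<delta> x1 x2 y1 y2}"

end

theory Submission
  imports Defs
begin


definition tm :: "real \<Rightarrow> real \<Rightarrow> real \<Rightarrow> real \<Rightarrow> nat \<Rightarrow> nat \<Rightarrow> nat \<Rightarrow> real \<Rightarrow> real \<Rightarrow> real" where
  "tm x1 x2 y1 y2 p m q a b = x1 ^ p * x2 ^ m * (min x1 x2) ^ q * rpow y1 a * rpow y2 b"

lemma rpow_nonneg: "0 \<le> y \<Longrightarrow> 0 \<le> rpow y a"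
  by (simp add: rpow_def)

lemma rpow_pos: "0 < y \<Longrightarrow> rpow y a = y powr a"
  by (simp add: rpow_def)

lemma rpow_one[simp]: "rpow 1 a = 1"
  by (simp add: rpow_def)

lemma rpow_zero_exp[simp]: "rpow y 0 = 1"
  by (simp add: rpow_def)

lemma rpow_zero_base: "a \<noteq> 0 \<Longrightarrow> rpow 0 a = 0"
  by (simp add: rpow_def)

lemma rpow_le1: "0 \<le> y \<Longrightarrow> y \<le> 1 \<Longrightarrow> 0 \<le> a \<Longrightarrow> rpow y a \<le> 1"
  by (simp add: rpow_def powr_le1)

lemma tm_nonneg: "0 \<le> x1 \<Longrightarrow> 0 \<le> x2 \<Longrightarrow> 0 \<le> y1 \<Longrightarrow> 0 \<le> y2 \<Longrightarrow> 0 \<le> tm x1 x2 y1 y2 p m q a b"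
  by (simp add: tm_def rpow_nonneg)

lemma pos1:
  fixes x1 x2 y1 y2 a b :: real and p q :: nat
  assumes "0 < x1" "0 < x2" "0 < y1" "0 < y2" "y1 \<le> 1" "y2 \<le> 1"
    "0 \<le> b" "b \<le> q" "a + b \<ge> p + q"
  shows "x1 powr p * min x1 x2 powr q * y1 powr a * y2 powr b
         \<le> (x1*y1) powr (p+q-b) * (x2*y2) powr b"
proof -
  let ?m = "min x1 x2"
  have m0: "0 < ?m" using assms by simp
  have "?m powr q = ?m powr (q-b) * ?m powr b" by (simp add: powr_add[symmetric])
  also have "\<dots> \<le> x1 powr (q-b) * x2 powr b"
    using assms m0 by (intro mult_mono powr_mono2) auto
  finally have h1: "?m powr q \<le> x1 powr (q-b) * x2 powr b" .
  have h2: "y1 powr a \<le> y1 powr (p+q-b)"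
    using assms by (intro powr_mono') auto
  have "x1 powr p * ?m powr q * y1 powr a * y2 powr b
        \<le> x1 powr p * (x1 powr (q-b) * x2 powr b) * y1 powr (p+q-b) * y2 powr b"
    using h1 h2 assms by (intro mult_mono mult_left_mono) auto
  also have "\<dots> = (x1 powr p * x1 powr (q-b)) * y1 powr (p+q-b) * (x2 powr b * y2 powr b)"
    by (simp add: algebra_simps)
  also have "\<dots> = (x1*y1) powr (p+q-b) * (x2*y2) powr b"
    by (simp add: powr_add[symmetric] powr_mult add_diff_eq)
  finally show ?thesis .
qed

lemma pos2:
  fixes x1 x2 y1 y2 a b c :: real and p q :: nat
  assumes "0 < x1" "0 < x2" "0 < y1" "0 < y2" "y1 \<le> 1" "y2 \<le> 1"
    "p \<le> c" "c \<le> p + q" "c \<le> a" "b \<ge> p + q - c" "2 * c \<ge> p + q" "x1*y1 \<le> x2*y2"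
  shows "x1 powr p * min x1 x2 powr q * y1 powr a * y2 powr b
         \<le> ((x1*y1 + x2*y2)/2) ^ (p+q)"
proof -
  let ?m = "min x1 x2" and ?u = "x1*y1" and ?v = "x2*y2"
  have m0: "0 < ?m" using assms by simp
  have u0: "0 < ?u" and v0: "0 < ?v" using assms by auto
  have "?m powr q = ?m powr (c-p) * ?m powr (p+q-c)" by (simp add: powr_add[symmetric])
  also have "\<dots> \<le> x1 powr (c-p) * x2 powr (p+q-c)"
    using assms m0 by (intro mult_mono powr_mono2) auto
  finally have h1: "?m powr q \<le> x1 powr (c-p) * x2 powr (p+q-c)" .
  have h2: "y1 powr a \<le> y1 powr c"
    using assms by (intro powr_mono') auto
  have h3: "y2 powr b \<le> y2 powr (p+q-c)"
    using assms by (intro powr_mono') auto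
  have "x1 powr p * ?m powr q * y1 powr a * y2 powr b
        \<le> x1 powr p * (x1 powr (c-p) * x2 powr (p+q-c)) * y1 powr c * y2 powr (p+q-c)"
    using h1 h2 h3 assms by (intro mult_mono mult_left_mono) auto
  also have "\<dots> = (x1 powr p * x1 powr (c-p)) * y1 powr c * (x2 powr (p+q-c) * y2 powr (p+q-c))"
    by (simp add: algebra_simps)
  also have "\<dots> = ?u powr c * ?v powr (p+q-c)"
    by (simp add: powr_add[symmetric] powr_mult)
  also have "\<dots> = ?u powr ((p+q)/2) * ?u powr (c - (p+q)/2) * ?v powr (p+q-c)"
    by (simp add: powr_add[symmetric])
  also have "\<dots> \<le> ?u powr ((p+q)/2) * ?v powr (c - (p+q)/2) * ?v powr (p+q-c)"
    using assms u0 v0 by (intro mult_right_mono mult_left_mono powr_mono2) auto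
  also have "\<dots> = ?u powr ((p+q)/2) * ?v powr ((p+q)/2)"
  proof -
    have e: "real p + real q - (real p + real q)/2 = (real p + real q)/2" by (simp add: field_simps)
    show ?thesis by (simp add: mult.assoc powr_add[symmetric] e)
  qed
  also have "\<dots> = (sqrt ?u * sqrt ?v) powr (p+q)"
    using u0 v0 by (simp add: powr_mult sqrt_def root_powr_inverse powr_powr)
  also have "\<dots> = (sqrt ?u * sqrt ?v) ^ (p+q)"
    using u0 v0 powr_realpow[of "sqrt ?u * sqrt ?v" "p+q"] by simp
  also have "\<dots> \<le> ((?u + ?v)/2) ^ (p+q)"
  proof (rule power_mono)
    have "0 \<le> (sqrt ?u - sqrt ?v)^2" by simp
    then show "sqrt ?u * sqrt ?v \<le> (?u + ?v)/2"
      using u0 v0 by (simp add: power2_eq_square algebra_simps)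
  qed (use u0 v0 in auto)
  finally show ?thesis .
qed

lemma tm_pos:
  assumes "0 < x1" "0 < x2" "0 < y1" "0 < y2"
  shows "tm x1 x2 y1 y2 p 0 q a b = x1 powr p * min x1 x2 powr q * y1 powr a * y2 powr b"
  using assms by (simp add: tm_def rpow_pos powr_realpow)

lemma core1:
  fixes x1 x2 y1 y2 a b :: real and p q :: nat
  assumes x1: "0 \<le> x1" and x2: "0 \<le> x2" and y1: "0 \<le> y1" "y1 \<le> 1" and y2: "0 \<le> y2" "y2 \<le> 1"
    and ap: "a \<ge> p" and b0: "0 \<le> b" and bq: "b \<le> q" and ab: "a + b \<ge> p + q" and a2: "2 * a \<ge> p + q"
  shows "tm x1 x2 y1 y2 p 0 q a b \<le>
    (if x2*y2 \<le> x1*y1 then tm (x1*y1) (x1*y1) 1 (x2*y2/(x1*y1)) p 0 q a b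
     else tm ((x1*y1+x2*y2)/2) ((x1*y1+x2*y2)/2) 1 1 p 0 q a b)"
proof -
  let ?u = "x1*y1" and ?v = "x2*y2"
  have u0: "0 \<le> ?u" and v0: "0 \<le> ?v" using assms by auto
  have rhs0: "0 \<le> (if ?v \<le> ?u then tm ?u ?u 1 (?v/?u) p 0 q a b
     else tm ((?u+?v)/2) ((?u+?v)/2) 1 1 p 0 q a b)"
    using u0 v0 by (auto intro!: tm_nonneg)
  show ?thesis
  proof (cases "p + q = 0")
    case True
    then have "p = 0" "q = 0" by auto
    with b0 bq have "b = 0" by simp
    have "rpow y1 a \<le> 1" using y1 ap by (intro rpow_le1) auto
    then show ?thesis using \<open>p = 0\<close> \<open>q = 0\<close> \<open>b = 0\<close> by (simp add: tm_def)
  next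
    case False
    then have n1: "p + q \<ge> 1" by arith
    have apos: "a > 0" using a2 n1 by simp
    show ?thesis
    proof (cases "?u = 0")
      case True
      have "tm x1 x2 y1 y2 p 0 q a b = 0"
      proof -
        have "x1 = 0 \<or> y1 = 0" using True by simp
        then show ?thesis
        proof
          assume "x1 = 0"
          show ?thesis
          proof (cases "p = 0")
            case True
            then have "q > 0" using n1 by simp
            then show ?thesis using \<open>x1 = 0\<close> True x2 by (simp add: tm_def)
          next
            case False
            then show ?thesis using \<open>x1 = 0\<close> by (simp add: tm_def)
          qed
        next
          assume "y1 = 0"
          then show ?thesis using apos by (simp add: tm_def rpow_zero_base)
        qed
      qed
      then show ?thesis using rhs0 by simp
    next
      case False
      then have x1p: "0 < x1" and y1p: "0 < y1" using x1 y1 u0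
        by (auto simp: less_le)
      have up: "0 < ?u" using x1p y1p by simp
      show ?thesis
      proof (cases "?v \<le> ?u")
        case vle: True
        have R: "tm ?u ?u 1 (?v/?u) p 0 q a b = ?u ^ p * ?u ^ q * rpow (?v/?u) b"
          by (simp add: tm_def)
        show ?thesis
        proof (cases "b = 0")
          case True
          have an: "a \<ge> p + q" using ab True by simp
          have "rpow y1 a = y1 powr a" using y1p by (simp add: rpow_pos)
          also have "\<dots> \<le> y1 powr (real (p+q))" using an y1 by (intro powr_mono') auto
          also have "\<dots> = y1 ^ (p+q)" using y1p powr_realpow[of y1 "p+q"] by simp
          finally have h1: "rpow y1 a \<le> y1 ^ (p+q)" .
          have h2: "min x1 x2 ^ q \<le> x1 ^ q" using x1 x2 by (intro power_mono) auto
          have "tm x1 x2 y1 y2 p 0 q a b = x1 ^ p * min x1 x2 ^ q * rpow y1 a"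
            using True by (simp add: tm_def)
          also have "\<dots> \<le> x1 ^ p * x1 ^ q * y1 ^ (p+q)"
            using h1 h2 x1 x2 y1 by (intro mult_mono mult_left_mono) (auto intro: rpow_nonneg)
          also have "\<dots> = ?u ^ p * ?u ^ q * rpow (?v/?u) b"
            using True by (simp add: power_mult_distrib power_add)
          finally show ?thesis using vle R by simp
        next
          case False
          then have bp: "b > 0" using b0 by simp
          show ?thesis
          proof (cases "x2 = 0 \<or> y2 = 0")
            case True
            have "tm x1 x2 y1 y2 p 0 q a b = 0"
            proof (cases "x2 = 0")
              case True
              have "q > 0" using bp bq by simp
              then show ?thesis using True x1 by (simp add: tm_def)
            next
              case False
              then have "y2 = 0" using \<open>x2 = 0 \<or> y2 = 0\<close> by simp
              then show ?thesis using bp by (simp add: tm_def rpow_zero_base)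
            qed
            then show ?thesis using rhs0 by simp
          next
            case False
            then have x2p: "0 < x2" and y2p: "0 < y2" using x2 y2 by (auto simp: less_le)
            have vp: "0 < ?v" using x2p y2p by simp
            have "tm x1 x2 y1 y2 p 0 q a b = x1 powr p * min x1 x2 powr q * y1 powr a * y2 powr b"
              using x1p x2p y1p y2p by (rule tm_pos)
            also have "\<dots> \<le> ?u powr (p+q-b) * ?v powr b"
              using x1p x2p y1p y2p y1 y2 b0 bq ab by (intro pos1) auto
            also have "\<dots> = ?u ^ p * ?u ^ q * rpow (?v/?u) b"
            proof -
              have "?u powr (p+q-b) = ?u powr (real (p+q)) / ?u powr b"
                using up by (simp add: powr_diff)
              also have "\<dots> = ?u ^ p * ?u ^ q / ?u powr b"
                using up powr_realpow[of ?u "p+q"] by (simp add: power_add)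
              finally show ?thesis using up vp
                by (simp add: rpow_pos powr_divide)
            qed
            finally show ?thesis using vle R by simp
          qed
        qed
      next
        case vgt: False
        then have vp: "0 < ?v" using up by simp
        then have x2p: "0 < x2" and y2p: "0 < y2" using x2 y2
          by (auto simp: less_le zero_less_mult_iff)
        let ?c = "min a (real (p+q))"
        have "tm x1 x2 y1 y2 p 0 q a b = x1 powr p * min x1 x2 powr q * y1 powr a * y2 powr b"
          using x1p x2p y1p y2p by (rule tm_pos)
        also have "\<dots> \<le> ((?u + ?v)/2) ^ (p+q)"
          using x1p x2p y1p y2p y1 y2 ap ab a2 b0 vgt
          by (intro pos2[where c = ?c]) (auto simp: min_def)
        also have "\<dots> = tm ((?u+?v)/2) ((?u+?v)/2) 1 1 p 0 q a b"
          by (simp add: tm_def power_add)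
        finally show ?thesis using vgt by simp
      qed
    qed
  qed
qed



context
  fixes V :: "'a set" and E :: "('a \<times> 'a) set" and S :: "'a set"
  assumes dg: "digraph V E" and SI: "S \<in> indep_sets V E"
begin

abbreviation "TT \<equiv> nbhd V E S"
abbreviation "Ao \<equiv> edges_from_to E S TT"
abbreviation "Bi \<equiv> edges_from_to E TT S"
abbreviation "FF \<equiv> FS_edges V E S"

definition outw :: "('a \<times> 'a \<Rightarrow> real) \<Rightarrow> 'a \<Rightarrow> real" where
  "outw w v = sum w {e\<in>Ao. fst e = v}"
definition inw :: "('a \<times> 'a \<Rightarrow> real) \<Rightarrow> 'a \<Rightarrow> real" where
  "inw w v = sum w {e\<in>Bi. snd e = v}"

lemma SV: "S \<subseteq> V" and Sind: "\<And>u v. u \<in> S \<Longrightarrow> v \<in> S \<Longrightarrow> (u, v) \<notin> E"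
  using SI by (auto simp: indep_sets_def Hstar_def)

lemma finV: "finite V" and EV: "E \<subseteq> V \<times> V"
  using dg by (auto simp: digraph_def)

lemma finS: "finite S" using SV finV finite_subset by blast

lemma finE: "finite E"
  using EV finV by (meson finite_SigmaI finite_subset)

lemma finAo: "finite Ao" and finBi: "finite Bi"
  using finE by (auto simp: edges_from_to_def)

lemma ST: "S \<inter> TT = {}" by (auto simp: nbhd_def)

lemma FF_eq: "FF = Ao \<union> Bi" by (simp add: FS_edges_def)

lemma inc_split: "v \<in> S \<Longrightarrow>
   {e\<in>FF. fst e = v \<or> snd e = v} = {e\<in>Ao. fst e = v} \<union> {e\<in>Bi. snd e = v}"
  using ST by (auto simp: FS_edges_def edges_from_to_def)

lemma inc_sum: "v \<in> S \<Longrightarrow> (\<Sum>e\<in>{e\<in>FF. fst e = v \<or> snd e = v}. w e) = outw w v + inw w v"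
proof -
  assume v: "v \<in> S"
  have d: "{e\<in>Ao. fst e = v} \<inter> {e\<in>Bi. snd e = v} = {}"
    using ST v by (auto simp: edges_from_to_def)
  show ?thesis
    unfolding inc_split[OF v] outw_def inw_def
    by (rule sum.union_disjoint) (use finAo finBi d in auto)
qed

lemma sumA: "sum w Ao = (\<Sum>v\<in>S. outw w v)"
  unfolding outw_def
  by (rule sum.group[symmetric]) (use finAo finS in \<open>auto simp: edges_from_to_def\<close>)

lemma sumB: "sum w Bi = (\<Sum>v\<in>S. inw w v)"
  unfolding inw_def
  by (rule sum.group[symmetric]) (use finBi finS in \<open>auto simp: edges_from_to_def\<close>)

context
  fixes w assumes mw: "max_frac_matching V E S w"
begin

lemma w_nonneg: "e \<in> FF \<Longrightarrow> 0 \<le> w e"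
  using mw by (auto simp: max_frac_matching_def)

lemma outw_nonneg: "0 \<le> outw w v"
  unfolding outw_def by (rule sum_nonneg) (auto intro: w_nonneg simp: FF_eq)

lemma inw_nonneg: "0 \<le> inw w v"
  unfolding inw_def by (rule sum_nonneg) (auto intro: w_nonneg simp: FF_eq)

lemma oi1: "v \<in> S \<Longrightarrow> outw w v + inw w v = 1"
  using mw inc_sum by (auto simp: max_frac_matching_def)

lemma AB_card: "sum w Ao + sum w Bi = card S"
  by (simp add: sumA sumB sum.distrib[symmetric] oi1)

lemma A_nonneg: "0 \<le> sum w Ao" by (simp add: sumA sum_nonneg outw_nonneg)
lemma B_nonneg: "0 \<le> sum w Bi" by (simp add: sumB sum_nonneg inw_nonneg)

lemma inw_zero: "\<not> (\<exists>u. (u, v) \<in> E) \<Longrightarrow> inw w v = 0"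
  unfolding inw_def edges_from_to_def by (rule sum.neutral) auto

lemma outw_zero: "\<not> (\<exists>u. (v, u) \<in> E) \<Longrightarrow> outw w v = 0"
  unfolding outw_def edges_from_to_def by (rule sum.neutral) auto

lemma A_ge: "real (card {v\<in>S. \<not> (\<exists>u. (u, v) \<in> E)}) \<le> sum w Ao"
proof -
  let ?P = "{v\<in>S. \<not> (\<exists>u. (u, v) \<in> E)}"
  have "\<And>v. v \<in> ?P \<Longrightarrow> outw w v = 1" using oi1 inw_zero by fastforce
  then have "real (card ?P) = (\<Sum>v\<in>?P. outw w v)" by simp
  also have "\<dots> \<le> (\<Sum>v\<in>S. outw w v)"
    by (rule sum_mono2) (use finS outw_nonneg in auto)
  finally show ?thesis by (simp add: sumA)
qed

lemma B_ge: "real (card {v\<in>S. \<not> (\<exists>u. (v, u) \<in> E)}) \<le> sum w Bi"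
proof -
  let ?P = "{v\<in>S. \<not> (\<exists>u. (v, u) \<in> E)}"
  have "\<And>v. v \<in> ?P \<Longrightarrow> inw w v = 1" using oi1 outw_zero by fastforce
  then have "real (card ?P) = (\<Sum>v\<in>?P. inw w v)" by simp
  also have "\<dots> \<le> (\<Sum>v\<in>S. inw w v)"
    by (rule sum_mono2) (use finS inw_nonneg in auto)
  finally show ?thesis by (simp add: sumB)
qed

lemma B_le: "sum w Bi \<le> real (card {v\<in>S. \<exists>u. (u, v) \<in> E})"
proof -
  let ?P = "{v\<in>S. \<exists>u. (u, v) \<in> E}"
  have "sum w Bi = (\<Sum>v\<in>S. inw w v)" by (rule sumB)
  also have "\<dots> = (\<Sum>v\<in>?P. inw w v)"
    by (rule sum.mono_neutral_right) (use finS inw_zero in auto)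
  also have "\<dots> \<le> (\<Sum>v\<in>?P. 1)"
  proof (rule sum_mono)
    fix v assume "v \<in> ?P"
    then show "inw w v \<le> 1" using oi1[of v] outw_nonneg[of v] by auto
  qed
  finally show ?thesis by simp
qed

lemma A_le: "sum w Ao \<le> real (card {v\<in>S. \<exists>u. (v, u) \<in> E})"
proof -
  let ?P = "{v\<in>S. \<exists>u. (v, u) \<in> E}"
  have "sum w Ao = (\<Sum>v\<in>S. outw w v)" by (rule sumA)
  also have "\<dots> = (\<Sum>v\<in>?P. outw w v)"
    by (rule sum.mono_neutral_right) (use finS outw_zero in auto)
  also have "\<dots> \<le> (\<Sum>v\<in>?P. 1)"
  proof (rule sum_mono)
    fix v assume "v \<in> ?P"
    then show "outw w v \<le> 1" using oi1[of v] inw_nonneg[of v] by auto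
  qed
  finally show ?thesis by simp
qed

end

lemma aS_ge: "max_frac_matching V E S w \<Longrightarrow> sum w Ao \<le> aS V E S"
proof -
  assume mw: "max_frac_matching V E S w"
  have bdd: "bdd_above ((\<lambda>w. sum w Ao) ` {w. max_frac_matching V E S w})"
    by (rule bdd_aboveI[where M = "real (card S)"])
       (use AB_card B_nonneg in fastforce)
  show ?thesis unfolding aS_def using mw
    by (auto intro!: cSup_upper bdd)
qed

lemma bS_ge: "max_frac_matching V E S w \<Longrightarrow> sum w Bi \<le> bS V E S"
proof -
  assume mw: "max_frac_matching V E S w"
  have bdd: "bdd_above ((\<lambda>w. sum w Bi) ` {w. max_frac_matching V E S w})"
    by (rule bdd_aboveI[where M = "real (card S)"])
       (use AB_card A_nonneg in fastforce)
  show ?thesis unfolding bS_def using mw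
    by (auto intro!: cSup_upper bdd)
qed

lemma aS_le: "{w. max_frac_matching V E S w} \<noteq> {} \<Longrightarrow> aS V E S \<le> real (card {v\<in>S. \<exists>u. (v, u) \<in> E})"
  unfolding aS_def by (auto intro!: cSup_least A_le)

lemma bS_le: "{w. max_frac_matching V E S w} \<noteq> {} \<Longrightarrow> bS V E S \<le> real (card {v\<in>S. \<exists>u. (u, v) \<in> E})"
  unfolding bS_def by (auto intro!: cSup_least B_le)

end



lemma aS_empty: "aS V E {} = 0"
proof -
  have "edges_from_to E {} (nbhd V E {}) = {}" by (simp add: edges_from_to_def)
  then show ?thesis unfolding aS_def by (auto simp: image_constant_conv)
qed

lemma bS_empty: "bS V E {} = 0"
proof -
  have "edges_from_to E (nbhd V E {}) {} = {}" by (simp add: edges_from_to_def)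
  then show ?thesis unfolding bS_def by (auto simp: image_constant_conv)
qed

lemma mfm_empty: "max_frac_matching V E {} (\<lambda>_. 0)"
  by (simp add: max_frac_matching_def FS_edges_def edges_from_to_def nbhd_def)

lemma empty_indep: "{} \<in> indep_sets V E" by (simp add: indep_sets_def)

lemma singleton_indep: "digraph V E \<Longrightarrow> S \<in> indep_sets V E \<Longrightarrow> v \<in> S \<Longrightarrow> {v} \<in> indep_sets V E"
  by (auto simp: indep_sets_def digraph_def)

lemma aS_noout: "\<not> (\<exists>u. (v, u) \<in> E) \<Longrightarrow> aS V E {v} = 0"
proof -
  assume "\<not> (\<exists>u. (v, u) \<in> E)"
  then have "edges_from_to E {v} (nbhd V E {v}) = {}" by (auto simp: edges_from_to_def)
  then show ?thesis unfolding aS_def by (auto simp: image_constant_conv)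
qed

lemma bS_noin: "\<not> (\<exists>u. (u, v) \<in> E) \<Longrightarrow> bS V E {v} = 0"
proof -
  assume "\<not> (\<exists>u. (u, v) \<in> E)"
  then have "edges_from_to E (nbhd V E {v}) {v} = {}" by (auto simp: edges_from_to_def)
  then show ?thesis unfolding bS_def by (auto simp: image_constant_conv)
qed

lemma H1_facts:
  assumes dg: "digraph V E" and H: "\<forall>S\<in>indep_sets V E. 2 * aS V E S \<ge> real (card S)"
    and SI: "S \<in> indep_sets V E"
  shows "vminus E S = 0" "aS V E S \<ge> vplus E S" "0 \<le> bS V E S" "bS V E S \<le> vpm E S"
    "aS V E S + bS V E S \<ge> vplus E S + vpm E S" "2 * aS V E S \<ge> vplus E S + vpm E S"
    "vplus E S + vpm E S = card S"
proof -
  have out: "\<exists>u. (v, u) \<in> E" if "v \<in> S" for v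
  proof (rule ccontr)
    assume "\<not> ?thesis"
    then have "aS V E {v} = 0" by (rule aS_noout)
    moreover have "{v} \<in> indep_sets V E" using singleton_indep[OF dg SI that] .
    ultimately show False using H by fastforce
  qed
  have fS: "finite S" using finS[OF dg SI] .
  have W: "{w. max_frac_matching V E S w} \<noteq> {}"
  proof
    assume W0: "{w. max_frac_matching V E S w} = {}"
    then have "aS V E S = 0" by (simp add: aS_def)
    then have "card S = 0" using H SI by fastforce
    then have "S = {}" using fS by simp
    then show False using W0 mfm_empty by auto
  qed
  then obtain w where mw: "max_frac_matching V E S w" by auto
  show "vminus E S = 0"
  proof -
    have "{v\<in>S. \<not> (\<exists>u. (v, u) \<in> E)} = {}" using out by auto
    then show ?thesis unfolding vminus_def by (metis card.empty)
  qed
  show "aS V E S \<ge> vplus E S" unfolding vplus_def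
    using A_ge[OF dg SI mw] aS_ge[OF dg SI mw] by linarith
  show "0 \<le> bS V E S" using B_nonneg[OF dg SI mw] bS_ge[OF dg SI mw] by linarith
  have eqin: "{v\<in>S. \<exists>u. (u, v) \<in> E} = {v\<in>S. (\<exists>u. (u, v) \<in> E) \<and> (\<exists>u. (v, u) \<in> E)}"
    using out by auto
  show "bS V E S \<le> vpm E S" using bS_le[OF dg SI W] eqin by (simp add: vpm_def)
  have un: "{v\<in>S. \<not> (\<exists>u. (u, v) \<in> E)} \<union> {v\<in>S. (\<exists>u. (u, v) \<in> E) \<and> (\<exists>u. (v, u) \<in> E)} = S"
    using out by auto
  have "card ({v\<in>S. \<not> (\<exists>u. (u, v) \<in> E)} \<union> {v\<in>S. (\<exists>u. (u, v) \<in> E) \<and> (\<exists>u. (v, u) \<in> E)})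
      = vplus E S + vpm E S"
    unfolding vplus_def vpm_def by (rule card_Un_disjoint) (use fS in auto)
  then show cs: "vplus E S + vpm E S = card S" using un by simp
  show "aS V E S + bS V E S \<ge> vplus E S + vpm E S"
    using AB_card[OF dg SI mw] aS_ge[OF dg SI mw] bS_ge[OF dg SI mw] cs by linarith
  show "2 * aS V E S \<ge> vplus E S + vpm E S" using H SI cs by fastforce
qed

lemma H2_facts:
  assumes dg: "digraph V E" and H: "\<forall>S\<in>indep_sets V E. 2 * bS V E S \<ge> real (card S)"
    and SI: "S \<in> indep_sets V E"
  shows "vplus E S = 0" "bS V E S \<ge> vminus E S" "0 \<le> aS V E S" "aS V E S \<le> vpm E S"
    "bS V E S + aS V E S \<ge> vminus E S + vpm E S" "2 * bS V E S \<ge> vminus E S + vpm E S"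
    "vminus E S + vpm E S = card S"
proof -
  have inn: "\<exists>u. (u, v) \<in> E" if "v \<in> S" for v
  proof (rule ccontr)
    assume "\<not> ?thesis"
    then have "bS V E {v} = 0" by (rule bS_noin)
    moreover have "{v} \<in> indep_sets V E" using singleton_indep[OF dg SI that] .
    ultimately show False using H by fastforce
  qed
  have fS: "finite S" using finS[OF dg SI] .
  have W: "{w. max_frac_matching V E S w} \<noteq> {}"
  proof
    assume W0: "{w. max_frac_matching V E S w} = {}"
    then have "bS V E S = 0" by (simp add: bS_def)
    then have "card S = 0" using H SI by fastforce
    then have "S = {}" using fS by simp
    then show False using W0 mfm_empty by auto
  qed
  then obtain w where mw: "max_frac_matching V E S w" by auto
  show "vplus E S = 0"
  proof -
    have "{v\<in>S. \<not> (\<exists>u. (u, v) \<in> E)} = {}" using inn by auto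
    then show ?thesis unfolding vplus_def by (metis card.empty)
  qed
  show "bS V E S \<ge> vminus E S" unfolding vminus_def
    using B_ge[OF dg SI mw] bS_ge[OF dg SI mw] by linarith
  show "0 \<le> aS V E S" using A_nonneg[OF dg SI mw] aS_ge[OF dg SI mw] by linarith
  have eqout: "{v\<in>S. \<exists>u. (v, u) \<in> E} = {v\<in>S. (\<exists>u. (u, v) \<in> E) \<and> (\<exists>u. (v, u) \<in> E)}"
    using inn by auto
  show "aS V E S \<le> vpm E S" using aS_le[OF dg SI W] eqout by (simp add: vpm_def)
  have un: "{v\<in>S. \<not> (\<exists>u. (v, u) \<in> E)} \<union> {v\<in>S. (\<exists>u. (u, v) \<in> E) \<and> (\<exists>u. (v, u) \<in> E)} = S"
    using inn by auto
  have "card ({v\<in>S. \<not> (\<exists>u. (v, u) \<in> E)} \<union> {v\<in>S. (\<exists>u. (u, v) \<in> E) \<and> (\<exists>u. (v, u) \<in> E)})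
      = vminus E S + vpm E S"
    unfolding vminus_def vpm_def by (rule card_Un_disjoint) (use fS in auto)
  then show cs: "vminus E S + vpm E S = card S" using un by simp
  show "bS V E S + aS V E S \<ge> vminus E S + vpm E S"
    using AB_card[OF dg SI mw] aS_ge[OF dg SI mw] bS_ge[OF dg SI mw] cs by linarith
  show "2 * bS V E S \<ge> vminus E S + vpm E S" using H SI cs by fastforce
qed



lemma finite_indep: "digraph V E \<Longrightarrow> finite (indep_sets V E)"
proof -
  assume "digraph V E"
  then have "finite (Pow V)" by (simp add: digraph_def)
  moreover have "indep_sets V E \<subseteq> Pow V" by (auto simp: indep_sets_def Hstar_def)
  ultimately show ?thesis by (rule finite_subset[rotated])
qed

lemma gH_zero:
  assumes dg: "digraph V E"
    and cnt: "\<And>S. S \<in> indep_sets V E \<Longrightarrow> vplus E S + vminus E S + vpm E S = card S"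
  shows "gH V E 0 0 y1 y2 = 1"
proof -
  let ?f = "\<lambda>S. (0::real) ^ vplus E S * 0 ^ vminus E S * (min 0 0) ^ vpm E S
                          * rpow y1 (aS V E S) * rpow y2 (bS V E S)"
  have z: "?f S = 0" if "S \<in> indep_sets V E - {{}}" for S
  proof -
    have "S \<in> indep_sets V E" "S \<noteq> {}" using that by auto
    moreover have "finite S" using finS[OF dg \<open>S \<in> indep_sets V E\<close>] .
    ultimately have "card S > 0" by (simp add: card_gt_0_iff)
    then have "vplus E S > 0 \<or> vminus E S > 0 \<or> vpm E S > 0"
      using cnt[OF \<open>S \<in> indep_sets V E\<close>] by arith
    then show ?thesis by auto
  qed
  have e: "?f {} = 1"
    by (simp add: vplus_def vminus_def vpm_def aS_empty bS_empty)
  have "gH V E 0 0 y1 y2 = ?f {} + sum ?f (indep_sets V E - {{}})"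
    unfolding gH_def by (rule sum.remove) (use finite_indep[OF dg] empty_indep in auto)
  also have "sum ?f (indep_sets V E - {{}}) = 0" using z by (rule sum.neutral[OF ballI])
  finally show ?thesis using e by simp
qed

lemma ivt_gH:
  assumes "0 \<le> X1" "0 \<le> X2" "gH V E 0 0 Y1 Y2 = 1" "1 + \<delta> \<le> gH V E X1 X2 Y1 Y2" "0 < \<delta>"
  shows "\<exists>t. 0 \<le> t \<and> t \<le> 1 \<and> gH V E (t*X1) (t*X2) Y1 Y2 = 1 + \<delta>"
proof -
  let ?f = "\<lambda>t. gH V E (t*X1) (t*X2) Y1 Y2"
  have c: "continuous_on {0..1} ?f"
    unfolding gH_def by (intro continuous_intros)
  have "?f 0 \<le> 1 + \<delta>" using assms by simp
  moreover have "1 + \<delta> \<le> ?f 1" using assms by simp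
  ultimately show ?thesis using IVT'[of ?f 0 "1+\<delta>" 1, OF _ _ _ c] by auto
qed



lemma Inf_restr1:
  assumes "\<And>x1 x2 y1 y2. G_feasible V E \<delta> x1 x2 y1 y2 \<Longrightarrow>
     \<exists>x1' x2' y2'. G_feasible V E \<delta> x1' x2' 1 y2' \<and> x1' * 1 + x2' * y2' \<le> x1 * y1 + x2 * y2"
  shows "GH V E \<delta> = Inf {ereal (x1 * y1 + x2 * y2) | x1 x2 y1 y2.
                              G_feasible V E \<delta> x1 x2 y1 y2 \<and> y1 = 1}"
  unfolding GH_def
proof (rule antisym)
  show "Inf {ereal (x1 * y1 + x2 * y2) | x1 x2 y1 y2. G_feasible V E \<delta> x1 x2 y1 y2}
    \<le> Inf {ereal (x1 * y1 + x2 * y2) | x1 x2 y1 y2. G_feasible V E \<delta> x1 x2 y1 y2 \<and> y1 = 1}"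
    by (rule Inf_superset_mono) blast
  show "Inf {ereal (x1 * y1 + x2 * y2) | x1 x2 y1 y2. G_feasible V E \<delta> x1 x2 y1 y2 \<and> y1 = 1}
    \<le> Inf {ereal (x1 * y1 + x2 * y2) | x1 x2 y1 y2. G_feasible V E \<delta> x1 x2 y1 y2}"
  proof (rule Inf_greatest)
    fix z assume "z \<in> {ereal (x1 * y1 + x2 * y2) | x1 x2 y1 y2. G_feasible V E \<delta> x1 x2 y1 y2}"
    then obtain x1 x2 y1 y2 where z: "z = ereal (x1 * y1 + x2 * y2)" and f: "G_feasible V E \<delta> x1 x2 y1 y2"
      by blast
    obtain x1' x2' y2' where f': "G_feasible V E \<delta> x1' x2' 1 y2'" and le: "x1' * 1 + x2' * y2' \<le> x1 * y1 + x2 * y2"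
      using assms[OF f] by blast
    have "Inf {ereal (x1 * y1 + x2 * y2) | x1 x2 y1 y2. G_feasible V E \<delta> x1 x2 y1 y2 \<and> y1 = 1}
        \<le> ereal (x1' * 1 + x2' * y2')"
      by (rule Inf_lower) (use f' in blast)
    also have "\<dots> \<le> z" using le z by simp
    finally show "Inf {ereal (x1 * y1 + x2 * y2) | x1 x2 y1 y2. G_feasible V E \<delta> x1 x2 y1 y2 \<and> y1 = 1} \<le> z" .
  qed
qed

lemma Inf_restr2:
  assumes "\<And>x1 x2 y1 y2. G_feasible V E \<delta> x1 x2 y1 y2 \<Longrightarrow>
     \<exists>x1' x2' y1'. G_feasible V E \<delta> x1' x2' y1' 1 \<and> x1' * y1' + x2' * 1 \<le> x1 * y1 + x2 * y2"
  shows "GH V E \<delta> = Inf {ereal (x1 * y1 + x2 * y2) | x1 x2 y1 y2.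
                              G_feasible V E \<delta> x1 x2 y1 y2 \<and> y2 = 1}"
  unfolding GH_def
proof (rule antisym)
  show "Inf {ereal (x1 * y1 + x2 * y2) | x1 x2 y1 y2. G_feasible V E \<delta> x1 x2 y1 y2}
    \<le> Inf {ereal (x1 * y1 + x2 * y2) | x1 x2 y1 y2. G_feasible V E \<delta> x1 x2 y1 y2 \<and> y2 = 1}"
    by (rule Inf_superset_mono) blast
  show "Inf {ereal (x1 * y1 + x2 * y2) | x1 x2 y1 y2. G_feasible V E \<delta> x1 x2 y1 y2 \<and> y2 = 1}
    \<le> Inf {ereal (x1 * y1 + x2 * y2) | x1 x2 y1 y2. G_feasible V E \<delta> x1 x2 y1 y2}"
  proof (rule Inf_greatest)
    fix z assume "z \<in> {ereal (x1 * y1 + x2 * y2) | x1 x2 y1 y2. G_feasible V E \<delta> x1 x2 y1 y2}"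
    then obtain x1 x2 y1 y2 where z: "z = ereal (x1 * y1 + x2 * y2)" and f: "G_feasible V E \<delta> x1 x2 y1 y2"
      by blast
    obtain x1' x2' y1' where f': "G_feasible V E \<delta> x1' x2' y1' 1" and le: "x1' * y1' + x2' * 1 \<le> x1 * y1 + x2 * y2"
      using assms[OF f] by blast
    have "Inf {ereal (x1 * y1 + x2 * y2) | x1 x2 y1 y2. G_feasible V E \<delta> x1 x2 y1 y2 \<and> y2 = 1}
        \<le> ereal (x1' * y1' + x2' * 1)"
      by (rule Inf_lower) (use f' in blast)
    also have "\<dots> \<le> z" using le z by simp
    finally show "Inf {ereal (x1 * y1 + x2 * y2) | x1 x2 y1 y2. G_feasible V E \<delta> x1 x2 y1 y2 \<and> y2 = 1} \<le> z" .
  qed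
qed

lemma tm_swap: "tm x1 x2 y1 y2 p m q a b = tm x2 x1 y2 y1 m p q b a"
  by (simp add: tm_def min.commute mult_ac)

lemma part1:
  assumes dg: "digraph V E" and dp: "\<delta> > 0"
    and H: "\<forall>S\<in>indep_sets V E. 2 * aS V E S \<ge> real (card S)"
    and f: "G_feasible V E \<delta> x1 x2 y1 y2"
  shows "\<exists>x1' x2' y2'. G_feasible V E \<delta> x1' x2' 1 y2' \<and> x1' * 1 + x2' * y2' \<le> x1 * y1 + x2 * y2"
proof -
  note HF = H1_facts[OF dg H]
  have x1: "0 \<le> x1" and x2: "0 \<le> x2" and y1: "0 \<le> y1" "y1 \<le> 1" and y2: "0 \<le> y2" "y2 \<le> 1"
    and g: "gH V E x1 x2 y1 y2 = 1 + \<delta>"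
    using f by (auto simp: G_feasible_def)
  define u where "u = x1 * y1"
  define v where "v = x2 * y2"
  have u0: "0 \<le> u" and v0: "0 \<le> v" using x1 x2 y1 y2 by (auto simp: u_def v_def)
  define X where "X = (if v \<le> u then u else (u + v) / 2)"
  define Y where "Y = (if v \<le> u then v / u else 1)"
  have X0: "0 \<le> X" using u0 v0 by (simp add: X_def)
  have Y0: "0 \<le> Y" "Y \<le> 1" using u0 v0 by (auto simp: Y_def divide_le_eq_1)
  have obj: "X + X * Y = u + v"
    using u0 v0 by (auto simp: X_def Y_def field_simps)
  have ge: "gH V E x1 x2 y1 y2 \<le> gH V E X X 1 Y"
    unfolding gH_def
  proof (rule sum_mono)
    fix S assume SI: "S \<in> indep_sets V E"
    have "x1 ^ vplus E S * x2 ^ vminus E S * min x1 x2 ^ vpm E S * rpow y1 (aS V E S) * rpow y2 (bS V E S)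
        = tm x1 x2 y1 y2 (vplus E S) 0 (vpm E S) (aS V E S) (bS V E S)"
      using HF(1)[OF SI] by (simp add: tm_def)
    also have "\<dots> \<le> tm X X 1 Y (vplus E S) 0 (vpm E S) (aS V E S) (bS V E S)"
      using core1[OF x1 x2 y1 y2 HF(2-6)[OF SI]] by (simp add: X_def Y_def u_def v_def split: if_split_asm)
    also have "\<dots> = X ^ vplus E S * X ^ vminus E S * min X X ^ vpm E S * rpow 1 (aS V E S) * rpow Y (bS V E S)"
      using HF(1)[OF SI] by (simp add: tm_def)
    finally show "x1 ^ vplus E S * x2 ^ vminus E S * min x1 x2 ^ vpm E S * rpow y1 (aS V E S) * rpow y2 (bS V E S)
        \<le> X ^ vplus E S * X ^ vminus E S * min X X ^ vpm E S * rpow 1 (aS V E S) * rpow Y (bS V E S)" .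
  qed
  have g0: "gH V E 0 0 1 Y = 1"
    by (rule gH_zero[OF dg]) (use HF(1) HF(7) in auto)
  obtain t where t: "0 \<le> t" "t \<le> 1" "gH V E (t*X) (t*X) 1 Y = 1 + \<delta>"
    using ivt_gH[OF X0 X0 g0 _ dp] ge g by auto
  have "G_feasible V E \<delta> (t*X) (t*X) 1 Y"
    using t X0 Y0 by (simp add: G_feasible_def)
  moreover have "t*X * 1 + t*X * Y \<le> x1 * y1 + x2 * y2"
  proof -
    have "t*X * 1 + t*X * Y = t * (X + X * Y)" by (simp add: algebra_simps)
    also have "\<dots> \<le> X + X * Y" using t X0 Y0 by (intro mult_left_le_one_le) auto
    finally show ?thesis using obj by (simp add: u_def v_def)
  qed
  ultimately show ?thesis by blast
qed

lemma part2:
  assumes dg: "digraph V E" and dp: "\<delta> > 0"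
    and H: "\<forall>S\<in>indep_sets V E. 2 * bS V E S \<ge> real (card S)"
    and f: "G_feasible V E \<delta> x1 x2 y1 y2"
  shows "\<exists>x1' x2' y1'. G_feasible V E \<delta> x1' x2' y1' 1 \<and> x1' * y1' + x2' * 1 \<le> x1 * y1 + x2 * y2"
proof -
  note HF = H2_facts[OF dg H]
  have x1: "0 \<le> x1" and x2: "0 \<le> x2" and y1: "0 \<le> y1" "y1 \<le> 1" and y2: "0 \<le> y2" "y2 \<le> 1"
    and g: "gH V E x1 x2 y1 y2 = 1 + \<delta>"
    using f by (auto simp: G_feasible_def)
  define u where "u = x2 * y2"
  define v where "v = x1 * y1"
  have u0: "0 \<le> u" and v0: "0 \<le> v" using x1 x2 y1 y2 by (auto simp: u_def v_def)
  define X where "X = (if v \<le> u then u else (u + v) / 2)"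
  define Y where "Y = (if v \<le> u then v / u else 1)"
  have X0: "0 \<le> X" using u0 v0 by (simp add: X_def)
  have Y0: "0 \<le> Y" "Y \<le> 1" using u0 v0 by (auto simp: Y_def divide_le_eq_1)
  have obj: "X * Y + X = u + v"
    using u0 v0 by (auto simp: X_def Y_def field_simps)
  have ge: "gH V E x1 x2 y1 y2 \<le> gH V E X X Y 1"
    unfolding gH_def
  proof (rule sum_mono)
    fix S assume SI: "S \<in> indep_sets V E"
    have "x1 ^ vplus E S * x2 ^ vminus E S * min x1 x2 ^ vpm E S * rpow y1 (aS V E S) * rpow y2 (bS V E S)
        = tm x2 x1 y2 y1 (vminus E S) 0 (vpm E S) (bS V E S) (aS V E S)"
      using HF(1)[OF SI] by (simp add: tm_def min.commute mult_ac)
    also have "\<dots> \<le> tm X X 1 Y (vminus E S) 0 (vpm E S) (bS V E S) (aS V E S)"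
      using core1[OF x2 x1 y2 y1 HF(2-6)[OF SI]] by (simp add: X_def Y_def u_def v_def split: if_split_asm)
    also have "\<dots> = X ^ vplus E S * X ^ vminus E S * min X X ^ vpm E S * rpow Y (aS V E S) * rpow 1 (bS V E S)"
      using HF(1)[OF SI] by (simp add: tm_def mult_ac)
    finally show "x1 ^ vplus E S * x2 ^ vminus E S * min x1 x2 ^ vpm E S * rpow y1 (aS V E S) * rpow y2 (bS V E S)
        \<le> X ^ vplus E S * X ^ vminus E S * min X X ^ vpm E S * rpow Y (aS V E S) * rpow 1 (bS V E S)" .
  qed
  have g0: "gH V E 0 0 Y 1 = 1"
    by (rule gH_zero[OF dg]) (use HF(1) HF(7) in auto)
  obtain t where t: "0 \<le> t" "t \<le> 1" "gH V E (t*X) (t*X) Y 1 = 1 + \<delta>"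
    using ivt_gH[OF X0 X0 g0 _ dp] ge g by auto
  have "G_feasible V E \<delta> (t*X) (t*X) Y 1"
    using t X0 Y0 by (simp add: G_feasible_def)
  moreover have "t*X * Y + t*X * 1 \<le> x1 * y1 + x2 * y2"
  proof -
    have "t*X * Y + t*X * 1 = t * (X * Y + X)" by (simp add: algebra_simps)
    also have "\<dots> \<le> X * Y + X" using t X0 Y0 by (intro mult_left_le_one_le) auto
    finally show ?thesis using obj by (simp add: u_def v_def)
  qed
  ultimately show ?thesis by blast
qed

theorem proposition5p7:
  fixes V :: "'a set" and E :: "('a \<times> 'a) set" and \<delta> :: real
  assumes "digraph V E" and "\<delta> > 0"
  shows "((\<forall>S\<in>indep_sets V E. 2 * aS V E S \<ge> real (card S)) \<longrightarrow>
            GH V E \<delta> = Inf {ereal (x1 * y1 + x2 * y2) | x1 x2 y1 y2.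
                              G_feasible V E \<delta> x1 x2 y1 y2 \<and> y1 = 1})
       \<and> ((\<forall>S\<in>indep_sets V E. 2 * bS V E S \<ge> real (card S)) \<longrightarrow>
            GH V E \<delta> = Inf {ereal (x1 * y1 + x2 * y2) | x1 x2 y1 y2.
                              G_feasible V E \<delta> x1 x2 y1 y2 \<and> y2 = 1})"
  using Inf_restr1[OF part1[OF assms]] Inf_restr2[OF part2[OF assms]] by blast


end
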